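(* Let $1\leq k\leq n$ and let $\Lambda_1,\dots,\Lambda_d\subset\mathbb{P}^n$ be $(k-1)$-dimensional linear subspaces satisfying $\mathrm{SP}(n-k)$. Let $2\leq r\leq d-1$ be an integer such that $\Lambda_{r+1},\dots,\Lambda_d$ do not satisfy $\mathrm{SP}(n-k)$. Then $$\dim\big(\mathrm{Span}(\Lambda_1,\dots,\Lambda_r)\cap\mathrm{Span}(\Lambda_{r+1},\dots,\Lambda_d)\big)\geq k-1.$$
   Context: $(k-1)$-dimensional linear subspaces $\Lambda_1,\dots,\Lambda_e\subset\mathbb{P}^n$ (not necessarily distinct) satisfy $\mathrm{SP}(n-k)$ if for every $j\in\{1,\dots,e\}$ and every $(n-k)$-dimensional linear subspace $L\subset\mathbb{P}^n$ meeting each $\Lambda_i$ with $i\neq j$, $L$ also meets $\Lambda_j$. (In particular a single subspace, $e=1$, does not satisfy this condition, since the empty intersection condition is met by an $(n-k)$-plane disjoint from it.) *)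

theory Defs
  imports Complex_Main "HOL-Library.Function_Algebras"
begin

text \<open>Projective space P^n over the complex numbers is modelled as the space of lines in
  the complex vector space of functions 'n => complex, where 'n is a finite index type with
  CARD('n) = n + 1.  A projective linear subspace of dimension m corresponds to a linear
  subspace of vector dimension m + 1.\<close>

definition cscale :: "complex \<Rightarrow> ('n \<Rightarrow> complex) \<Rightarrow> ('n \<Rightarrow> complex)" where
  "cscale c v = (\<lambda>i. c * v i)"

interpretation cv: vector_space "cscale :: complex \<Rightarrow> ('n \<Rightarrow> complex) \<Rightarrow> _"
  by unfold_locales (auto simp: cscale_def fun_eq_iff algebra_simps)

definition proj_subspace :: "int \<Rightarrow> ('n::finite \<Rightarrow> complex) set \<Rightarrow> bool" where
  "proj_subspace m V \<longleftrightarrow> cv.subspace V \<and> int (cv.dim V) = m + 1"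

text \<open>Projective dimension of (the projectivisation of) a linear subspace; the empty
  projective set (zero subspace) has dimension -1.\<close>
definition pdim :: "('n::finite \<Rightarrow> complex) set \<Rightarrow> int" where
  "pdim V = int (cv.dim V) - 1"

definition meets :: "('n \<Rightarrow> complex) set \<Rightarrow> ('n \<Rightarrow> complex) set \<Rightarrow> bool" where
  "meets A B \<longleftrightarrow> (\<exists>v. v \<noteq> 0 \<and> v \<in> A \<and> v \<in> B)"

definition pspan :: "('i \<Rightarrow> ('n \<Rightarrow> complex) set) \<Rightarrow> 'i set \<Rightarrow> ('n \<Rightarrow> complex) set" where
  "pspan \<Lambda> I = cv.span (\<Union>i\<in>I. \<Lambda> i)"

text \<open>SP(m) for the family \<Lambda>_i, i in I (the subspaces listed with multiplicity).\<close>
definition SP :: "int \<Rightarrow> ('i \<Rightarrow> ('n::finite \<Rightarrow> complex) set) \<Rightarrow> 'i set \<Rightarrow> bool" where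
  "SP m \<Lambda> I \<longleftrightarrow> (\<forall>j\<in>I. \<forall>L. proj_subspace m L \<and> (\<forall>i\<in>I - {j}. meets L (\<Lambda> i))
                      \<longrightarrow> meets L (\<Lambda> j))"

end

theory Submission
  imports Defs
begin
definition ebas :: "('n::finite \<Rightarrow> complex) set" where
  "ebas = range (\<lambda>i j. if j = i then 1 else 0)"

lemma sum_fun_app: "(sum f S) x = sum (\<lambda>v. f v x) S"
  by (induction S rule: infinite_finite_induct) auto

lemma ebas_indep: "\<not> cv.dependent (ebas :: ('n::finite \<Rightarrow> complex) set)"
proof
  assume "cv.dependent (ebas :: ('n::finite \<Rightarrow> complex) set)"
  then obtain t :: "('n \<Rightarrow> complex) set" and u :: "('n \<Rightarrow> complex) \<Rightarrow> complex" where t: "finite t" "t \<subseteq> ebas" "(\<Sum>v\<in>t. cscale (u v) v) = 0" "\<exists>v\<in>t. u v \<noteq> 0"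
    unfolding cv.dependent_explicit by blast
  then obtain v where v: "v \<in> t" "u v \<noteq> 0" by blast
  then obtain i where i: "v = (\<lambda>j. if j = i then 1 else 0)" using t(2) unfolding ebas_def by blast
  have "(\<Sum>w\<in>t. cscale (u w) w) i = (\<Sum>w\<in>t. u w * w i)" by (simp add: sum_fun_app cscale_def)
  also have "\<dots> = u v * v i"
  proof (rule sum.remove[OF t(1) v(1), THEN trans])
    have "(\<Sum>w\<in>t - {v}. u w * w i) = 0"
    proof (rule sum.neutral, intro ballI)
      fix w assume w: "w \<in> t - {v}"
      then obtain i' where i': "w = (\<lambda>j. if j = i' then 1 else 0)" using t(2) unfolding ebas_def by blast
      with w i have "i' \<noteq> i" by auto
      then show "u w * w i = 0" using i' by simp
    qed
    then show "u v * v i + (\<Sum>w\<in>t - {v}. u w * w i) = u v * v i" by simp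
  qed
  also have "\<dots> = u v" using i by simp
  finally show False using t(3) v(2) by simp
qed

lemma ebas_span: "cv.span (ebas :: ('n::finite \<Rightarrow> complex) set) = UNIV"
proof -
  have "f \<in> cv.span ebas" for f :: "'n \<Rightarrow> complex"
  proof -
    have "f = (\<Sum>i\<in>UNIV. cscale (f i) (\<lambda>j. if j = i then 1 else 0))"
    proof (rule ext)
      fix x
      have "\<And>v. f v * (if x = v then 1 else 0) = (if x = v then f v else 0)" by simp
      then show "f x = (\<Sum>i\<in>UNIV. cscale (f i) (\<lambda>j. if j = i then 1 else 0)) x"
        by (simp add: sum_fun_app cscale_def)
    qed
    also have "\<dots> \<in> cv.span ebas"
      by (intro cv.span_sum cv.span_scale cv.span_base) (auto simp: ebas_def)
    finally show ?thesis .
  qed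
  then show ?thesis by auto
qed

interpretation cvf: finite_dimensional_vector_space "cscale :: complex \<Rightarrow> ('n::finite \<Rightarrow> complex) \<Rightarrow> _" ebas
proof unfold_locales
  show "finite (ebas :: ('n::finite \<Rightarrow> complex) set)" unfolding ebas_def by simp
qed (use ebas_indep ebas_span in auto)

lemma card_ebas: "card (ebas :: ('n::finite \<Rightarrow> complex) set) = card (UNIV :: 'n set)"
  unfolding ebas_def
proof (rule card_image, rule inj_onI)
  fix x y :: 'n
  assume eq: "(\<lambda>j. if j = x then 1 else 0) = (\<lambda>j. if j = y then (1::complex) else 0)"
  have "(if x = x then 1 else 0) = (if x = y then (1::complex) else 0)" using fun_cong[OF eq, of x] .
  then show "x = y" by (simp split: if_splits)
qed

lemma dim_univ: "cv.dim (UNIV :: ('n::finite \<Rightarrow> complex) set) = card (UNIV :: 'n set)"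
  using cvf.dim_UNIV card_ebas by simp


lemma sp_id: "cv.subspace (S :: ('n \<Rightarrow> complex) set) \<Longrightarrow> cv.span S = S"
  by (rule cv.span_subspace) (auto intro: cv.span_base)

lemma dim_direct_sum:
  fixes U W :: "('n::finite \<Rightarrow> complex) set"
  assumes U: "cv.subspace U" and W: "cv.subspace W" and UW: "U \<inter> W \<subseteq> {0}"
  shows "cv.dim (cv.span (U \<union> W)) = cv.dim U + cv.dim W"
proof -
  obtain T where T: "T \<subseteq> W" "cv.independent T" "W \<subseteq> cv.span T" "card T = cv.dim W"
    using cv.basis_exists[of W] by blast
  have fT: "finite T" using T(2) cvf.finiteI_independent by blast
  have main: "finite T' \<Longrightarrow> T' \<subseteq> T \<Longrightarrow> cv.dim (cv.span (U \<union> T')) = cv.dim U + card T'" for T'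
  proof (induction T' rule: finite_induct)
    case empty then show ?case using U by simp
  next
    case (insert x T')
    have xT: "x \<in> T" "T' \<subseteq> T" using insert by auto
    have indep: "cv.independent (insert x T')"
      using T(2) insert(4) cv.dependent_mono by blast
    then have xnot: "x \<notin> cv.span T'" using insert(2) cv.independent_insert[of x T'] by simp
    have "x \<notin> cv.span (U \<union> T')"
    proof
      assume "x \<in> cv.span (U \<union> T')"
      then obtain a b where ab: "x = a + b" "a \<in> cv.span U" "b \<in> cv.span T'"
        unfolding cv.span_Un by blast
      have aU: "a \<in> U" using ab(2) U sp_id by blast
      have bW: "b \<in> W" using ab(3) cv.span_mono[OF order.trans[OF xT(2) T(1)]] W sp_id by blast
      have xW: "x \<in> W" using xT T(1) by auto
      have "a = x - b" using ab by simp
      then have "a \<in> W" using xW bW W cv.subspace_diff by metis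
      then have "a = 0" using aU UW by auto
      then show False using ab xnot by simp
    qed
    then have "cv.dim (insert x (U \<union> T')) = cv.dim (U \<union> T') + 1"
      using cvf.dim_insert[of x "U \<union> T'"] by simp
    moreover have "cv.dim (U \<union> T') = cv.dim U + card T'"
      using insert(3) xT cv.dim_span[of "U \<union> T'"] by simp
    moreover have "U \<union> insert x T' = insert x (U \<union> T')" by auto
    ultimately show ?case using insert(1,2) cv.dim_span[of "U \<union> insert x T'"] by simp
  qed
  have "cv.span (U \<union> W) = cv.span (U \<union> T)"
    unfolding cv.span_eq
  proof (intro conjI)
    show "U \<union> W \<subseteq> cv.span (U \<union> T)"
      using T(3) cv.span_mono[of T "U \<union> T"] cv.span_superset[of "U \<union> T"] by auto
    show "U \<union> T \<subseteq> cv.span (U \<union> W)"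
      using T(1) cv.span_superset[of "U \<union> W"] by auto
  qed
  then show ?thesis using main[of T] T(4) fT by simp
qed


lemma extend_avoid:
  fixes X Y :: "('n::finite \<Rightarrow> complex) set"
  assumes X: "cv.subspace X" and Y: "cv.subspace Y" and XY: "X \<subseteq> Y"
    and dimXY: "cv.dim X + m \<le> cv.dim Y"
  shows "cv.subspace L \<Longrightarrow> L \<subseteq> Y \<Longrightarrow> L \<inter> X \<subseteq> {0} \<Longrightarrow> cv.dim L \<le> m \<Longrightarrow>
    \<exists>F. cv.subspace F \<and> L \<subseteq> F \<and> F \<subseteq> Y \<and> F \<inter> X \<subseteq> {0} \<and> cv.dim F = m"
proof (induction "m - cv.dim L" arbitrary: L)
  case 0
  then show ?case by (intro exI[of _ L]) auto
next
  case (Suc p L)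
  have lt: "cv.dim L < m" using Suc(2) by simp
  have "cv.dim (cv.span (L \<union> X)) = cv.dim L + cv.dim X"
    using dim_direct_sum[OF Suc(3) X Suc(5)] .
  then have dlt: "cv.dim (cv.span (L \<union> X)) < cv.dim Y" using lt dimXY by simp
  have "\<not> Y \<subseteq> cv.span (L \<union> X)"
  proof
    assume "Y \<subseteq> cv.span (L \<union> X)"
    then have "cv.dim Y \<le> cv.dim (cv.span (L \<union> X))" by (rule cvf.dim_subset)
    then show False using dlt by simp
  qed
  then obtain v where v: "v \<in> Y" "v \<notin> cv.span (L \<union> X)" by blast
  define L' where "L' = cv.span (insert v L)"
  have sL: "cv.span L = L" using Suc(3) sp_id by blast
  have vL: "v \<notin> cv.span L" using v(2) cv.span_mono[of L "L \<union> X"] by blast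
  have L'sub: "cv.subspace L'" unfolding L'_def by simp
  have dimL': "cv.dim L' = cv.dim L + 1"
    unfolding L'_def cv.dim_span using vL cvf.dim_insert[of v L] by simp
  have LL': "L \<subseteq> L'" unfolding L'_def using cv.span_superset by blast
  have L'Y: "L' \<subseteq> Y" unfolding L'_def using Suc(4) v(1) Y by (intro cv.span_minimal) auto
  have L'X: "L' \<inter> X \<subseteq> {0}"
  proof
    fix x assume x: "x \<in> L' \<inter> X"
    then have "x \<in> cv.span (insert v L)" unfolding L'_def by blast
    then obtain c where c: "x - cscale c v \<in> cv.span L"
      using cv.span_breakdown_eq by blast
    show "x \<in> {0}"
    proof (cases "c = 0")
      case True
      then have "cscale c v = 0" using cv.scale_zero_left by simp
      then have "x \<in> L" using c sL by (metis diff_zero)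
      then show ?thesis using x Suc(5) by auto
    next
      case False
      have h1: "x \<in> cv.span (L \<union> X)" using x cv.span_base[of x "L \<union> X"] by blast
      have h2: "x - cscale c v \<in> cv.span (L \<union> X)" using c cv.span_mono[of L "L \<union> X"] by blast
      have "x - (x - cscale c v) \<in> cv.span (L \<union> X)" by (rule cv.span_diff[OF h1 h2])
      then have "cscale (inverse c) (x - (x - cscale c v)) \<in> cv.span (L \<union> X)"
        by (rule cv.span_scale)
      moreover have "cscale (inverse c) (x - (x - cscale c v)) = v"
        using False by (simp add: cscale_def fun_eq_iff)
      ultimately show ?thesis using v(2) by simp
    qed
  qed
  have "p = m - cv.dim L'" using Suc(2) dimL' by simp
  then obtain F where F: "cv.subspace F" "L' \<subseteq> F" "F \<subseteq> Y" "F \<inter> X \<subseteq> {0}" "cv.dim F = m"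
    using Suc(1)[of L'] L'sub L'Y L'X dimL' lt by auto
  then show ?case using LL' by (intro exI[of _ F]) auto
qed


theorem lemma2p11:
  fixes \<Lambda> :: "nat \<Rightarrow> ('n::finite \<Rightarrow> complex) set"
    and n k d r :: nat
  assumes "n = card (UNIV :: 'n set) - 1"
    and "1 \<le> k" and "k \<le> n"
    and "\<forall>i\<in>{1..d}. proj_subspace (int k - 1) (\<Lambda> i)"
    and "SP (int n - int k) \<Lambda> {1..d}"
    and "2 \<le> r" and "r \<le> d - 1"
    and "\<not> SP (int n - int k) \<Lambda> {r+1..d}"
  shows "pdim (pspan \<Lambda> {1..r} \<inter> pspan \<Lambda> {r+1..d}) \<ge> int k - 1"
proof (rule ccontr)
  assume neg: "\<not> ?thesis"
  define A where "A = pspan \<Lambda> {1..r}"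
  define B where "B = pspan \<Lambda> {r+1..d}"
  define C where "C = A \<inter> B"
  have cardn: "card (UNIV :: 'n set) = n + 1"
    using assms(1) card_gt_0_iff[of "UNIV :: 'n set"] by simp
  have dimU: "cv.dim (UNIV :: ('n \<Rightarrow> complex) set) = n + 1" by (subst dim_univ) (rule cardn)
  have sA: "cv.subspace A" unfolding A_def pspan_def by simp
  have sB: "cv.subspace B" unfolding B_def pspan_def by simp
  have sC: "cv.subspace C" unfolding C_def using sA sB cv.subspace_inter by blast
  have dC: "cv.dim C < k" using neg unfolding C_def A_def B_def pdim_def by simp
  have LA: "\<Lambda> i \<subseteq> A" if "i \<in> {1..r}" for i
    unfolding A_def pspan_def using that cv.span_superset by blast
  have LB: "\<Lambda> i \<subseteq> B" if "i \<in> {r+1..d}" for i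
    unfolding B_def pspan_def using that cv.span_superset by blast
  have Ls: "cv.subspace (\<Lambda> i)" "cv.dim (\<Lambda> i) = k" if "i \<in> {1..d}" for i
    using assms(4) that unfolding proj_subspace_def by auto
  obtain j L0 where j: "j \<in> {r+1..d}" and L0: "proj_subspace (int n - int k) L0"
    and L0m: "\<forall>i\<in>{r+1..d} - {j}. meets L0 (\<Lambda> i)" and L0j: "\<not> meets L0 (\<Lambda> j)"
    using assms(8) unfolding SP_def by blast
  have j1: "j \<in> {1..d}" using j by auto
  have sL0: "cv.subspace L0" using L0 unfolding proj_subspace_def by simp
  define M where "M = L0 \<inter> B"
  have sM: "cv.subspace M" unfolding M_def using sL0 sB cv.subspace_inter by blast
  have CA: "C \<subseteq> A" unfolding C_def by blast
  have dCA: "cv.dim C \<le> cv.dim A" using cvf.dim_subset[OF CA] .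
  obtain F where sF: "cv.subspace F" and FA: "F \<subseteq> A" and FC: "F \<inter> C \<subseteq> {0}"
    and dF: "cv.dim F = cv.dim A - cv.dim C"
    using extend_avoid[OF sC sA CA, of "cv.dim A - cv.dim C" "{0}"] dCA cv.subspace_0[OF sA]
      cv.subspace_single_0
    by auto
  have FB: "F \<inter> B \<subseteq> {0}" using FA FC unfolding C_def by blast
  have meetF: "\<exists>v. v \<noteq> 0 \<and> v \<in> F \<and> v \<in> \<Lambda> i" if i: "i \<in> {1..r}" for i
  proof (rule ccontr)
    assume "\<not> ?thesis"
    then have disj: "\<Lambda> i \<inter> F \<subseteq> {0}" by blast
    have i1: "i \<in> {1..d}" using i assms(7) by auto
    have "cv.dim (cv.span (\<Lambda> i \<union> F)) = k + cv.dim F"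
      using dim_direct_sum[OF Ls(1)[OF i1] sF disj] Ls(2)[OF i1] by simp
    moreover have "cv.span (\<Lambda> i \<union> F) \<subseteq> A"
      using LA[OF i] FA sA by (intro cv.span_minimal) auto
    ultimately have "k + cv.dim F \<le> cv.dim A" using cvf.dim_subset by metis
    then show False using dF dC dCA by simp
  qed
  define L' where "L' = cv.span (M \<union> F)"
  have sL': "cv.subspace L'" unfolding L'_def by simp
  have L'j: "L' \<inter> \<Lambda> j \<subseteq> {0}"
  proof
    fix x assume x: "x \<in> L' \<inter> \<Lambda> j"
    then obtain a b where ab: "x = a + b" "a \<in> cv.span M" "b \<in> cv.span F"
      unfolding L'_def cv.span_Un by blast
    have aM: "a \<in> M" using ab(2) sM sp_id by blast
    have bF: "b \<in> F" using ab(3) sF sp_id by blast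
    have xB: "x \<in> B" using x LB[OF j] by blast
    have aB: "a \<in> B" using aM unfolding M_def by blast
    have "b = x - a" using ab by simp
    then have "b \<in> B" using xB aB sB cv.subspace_diff by metis
    then have "b = 0" using bF FB by blast
    then have "x \<in> L0" using ab aM unfolding M_def by simp
    then show "x \<in> {0}" using L0j x unfolding meets_def by blast
  qed
  have "cv.dim (cv.span (L' \<union> \<Lambda> j)) = cv.dim L' + k"
    using dim_direct_sum[OF sL' Ls(1)[OF j1] L'j] Ls(2)[OF j1] by simp
  moreover have "cv.dim (cv.span (L' \<union> \<Lambda> j)) \<le> n + 1"
    using cvf.dim_subset[of _ UNIV] dimU by (metis subset_UNIV)
  ultimately have dL': "cv.dim L' \<le> n + 1 - k" by simp
  obtain L where sL: "cv.subspace L" and L'L: "L' \<subseteq> L" and Lj: "L \<inter> \<Lambda> j \<subseteq> {0}"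
    and dL: "cv.dim L = n + 1 - k"
    using extend_avoid[OF Ls(1)[OF j1] cv.subspace_UNIV subset_UNIV, of "n + 1 - k" L']
      sL' L'j dL' Ls(2)[OF j1] dimU assms(3) by auto
  have pL: "proj_subspace (int n - int k) L"
    unfolding proj_subspace_def using sL dL assms(3) by simp
  have mL: "\<forall>i\<in>{1..d} - {j}. meets L (\<Lambda> i)"
  proof
    fix i assume i: "i \<in> {1..d} - {j}"
    show "meets L (\<Lambda> i)"
    proof (cases "i \<le> r")
      case True
      then obtain v where "v \<noteq> 0" "v \<in> F" "v \<in> \<Lambda> i" using meetF[of i] i by auto
      moreover have "F \<subseteq> L" using L'L cv.span_superset[of "M \<union> F"] unfolding L'_def by blast
      ultimately show ?thesis unfolding meets_def by blast
    next
      case False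
      then have i2: "i \<in> {r+1..d} - {j}" using i by auto
      then obtain v where v: "v \<noteq> 0" "v \<in> L0" "v \<in> \<Lambda> i" using L0m unfolding meets_def by blast
      then have "v \<in> M" unfolding M_def using LB[of i] i2 by blast
      moreover have "M \<subseteq> L" using L'L cv.span_superset[of "M \<union> F"] unfolding L'_def by blast
      ultimately show ?thesis using v unfolding meets_def by blast
    qed
  qed
  have "meets L (\<Lambda> j)" using assms(5) j1 pL mL unfolding SP_def by blast
  then show False using Lj unfolding meets_def by blast
qed

end
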